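(* Let $G_1=(g_{kj})$ and $G_2=(g'_{kj})$ be semi-normalized Gram matrices (for tuples of the same type $m,i$), represented by the vectors $V_{G_1},V_{G_2}\in\mathbb H^{t}$. Then $G_1$ and $G_2$ are equivalent (i.e. $G_1=D^*G_2D$ for some nonsingular diagonal quaternionic matrix $D$) if and only if $O_{V_{G_1}}=O_{V_{G_2}}$, where $O_V=\{\bar\mu V\mu:\mu\in\mathrm{Sp}(1)\}$.
   Context: Setting: $m\ge4$, $3\le i\le m$; tuples $p=(p_1,\dots,p_m)$ of distinct points of $\overline{\mathbf H^n_{\mathbb H}}$ with the first $i$ points in $\partial\mathbf H^n_{\mathbb H}$ and the rest in $\mathbf H^n_{\mathbb H}$, where $\mathbb H^{n,1}$ is the right quaternionic space $\mathbb H^{n+1}$ with form $\langle\mathbf z,\mathbf w\rangle=\bar w_{n+1}z_1+\bar w_2z_2+\cdots+\bar w_nz_n+\bar w_1z_{n+1}$. The Gram matrix of a lift $(\mathbf p_1,\dots,\mathbf p_m)$ is $g_{kj}=\langle\mathbf p_j,\mathbf p_k\rangle$; it is semi-normalized if $g_{kk}=0$ for $k\le i$, $g_{kk}=-1$ for $k>i$, $g_{1j}=1$ for $2\le j\le i$, $|g_{23}|=1$, and $g_{1j}=r_{1j}>0$ real for $i<j\le m$. Such a matrix is represented by $V_G=(r_{1(i+1)},\dots,r_{1m},g_{23},g_{24},\dots,g_{2m},g_{34},\dots,g_{3m},\dots,g_{(m-1)m})\in\mathbb H^{t}$, $t=\frac{m^2-m-2i+2}{2}$. $\mathrm{Sp}(1)$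 is the group of unit quaternions, acting on $\mathbb H^t$ componentwise by $V\mapsto\bar\mu V\mu$. *)

theory Defs
  imports Complex_Main
begin

datatype quat = Quat (qRe: real) (qI: real) (qJ: real) (qK: real)

instantiation quat :: "{zero, one, plus, minus, uminus, times}"
begin
definition "0 = Quat 0 0 0 0"
definition "1 = Quat 1 0 0 0"
definition "x + y = Quat (qRe x + qRe y) (qI x + qI y) (qJ x + qJ y) (qK x + qK y)"
definition "x - y = Quat (qRe x - qRe y) (qI x - qI y) (qJ x - qJ y) (qK x - qK y)"
definition "- x = Quat (- qRe x) (- qI x) (- qJ x) (- qK x)"
definition "x * y = Quat
   (qRe x * qRe y - qI x * qI y - qJ x * qJ y - qK x * qK y)
   (qRe x * qI y + qI x * qRe y + qJ x * qK y - qK x * qJ y)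
   (qRe x * qJ y - qI x * qK y + qJ x * qRe y + qK x * qI y)
   (qRe x * qK y + qI x * qJ y - qJ x * qI y + qK x * qRe y)"
instance ..
end

definition qcnj :: "quat \<Rightarrow> quat" where
  "qcnj x = Quat (qRe x) (- qI x) (- qJ x) (- qK x)"

definition qnorm :: "quat \<Rightarrow> real" where
  "qnorm x = sqrt ((qRe x)^2 + (qI x)^2 + (qJ x)^2 + (qK x)^2)"

definition qreal :: "real \<Rightarrow> quat" where
  "qreal r = Quat r 0 0 0"

text \<open>Vectors of H^{n,1} = H^{n+1} (right H-module) are functions on indices 1..n+1.
  The Hermitian form
  <z,w> = conj(w_{n+1}) z_1 + conj(w_2) z_2 + ... + conj(w_n) z_n + conj(w_1) z_{n+1}.\<close>

definition hform :: "nat \<Rightarrow> (nat \<Rightarrow> quat) \<Rightarrow> (nat \<Rightarrow> quat) \<Rightarrow> quat" where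
  "hform n z w = qcnj (w (n+1)) * z 1
      + foldr (\<lambda>k acc. qcnj (w k) * z k + acc) [2..<n+1] 0
      + qcnj (w 1) * z (n+1)"

definition nonzero_vec :: "nat \<Rightarrow> (nat \<Rightarrow> quat) \<Rightarrow> bool" where
  "nonzero_vec n z \<longleftrightarrow> (\<exists>k\<in>{1..n+1}. z k \<noteq> 0)"

text \<open>z and w represent the same point of projective space P(H^{n,1})
  iff z = w \<lambda> for some quaternion \<lambda> (right scalar multiplication).\<close>
definition same_point :: "nat \<Rightarrow> (nat \<Rightarrow> quat) \<Rightarrow> (nat \<Rightarrow> quat) \<Rightarrow> bool" where
  "same_point n z w \<longleftrightarrow> (\<exists>c. \<forall>k\<in>{1..n+1}. z k = w k * c)"

text \<open>Negative vectors (lifts of points of H^n_H) and null nonzero vectors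
  (lifts of points of the boundary).\<close>
definition negative_vec :: "nat \<Rightarrow> (nat \<Rightarrow> quat) \<Rightarrow> bool" where
  "negative_vec n z \<longleftrightarrow> (\<exists>c<0. hform n z z = qreal c)"

definition null_vec :: "nat \<Rightarrow> (nat \<Rightarrow> quat) \<Rightarrow> bool" where
  "null_vec n z \<longleftrightarrow> nonzero_vec n z \<and> hform n z z = 0"

text \<open>A lift (p_1,...,p_m) of a tuple of distinct points of the closure of H^n_H,
  the first i on the boundary and the rest inside.\<close>
definition admissible_lift ::
  "nat \<Rightarrow> nat \<Rightarrow> nat \<Rightarrow> (nat \<Rightarrow> nat \<Rightarrow> quat) \<Rightarrow> bool" where
  "admissible_lift n m i P \<longleftrightarrow>
     (\<forall>k\<in>{1..i}. null_vec n (P k)) \<and>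
     (\<forall>k\<in>{i+1..m}. negative_vec n (P k)) \<and>
     (\<forall>k\<in>{1..m}. \<forall>j\<in>{1..m}. k \<noteq> j \<longrightarrow> \<not> same_point n (P k) (P j))"

definition is_gram_of :: "nat \<Rightarrow> nat \<Rightarrow> (nat \<Rightarrow> nat \<Rightarrow> quat) \<Rightarrow> (nat \<Rightarrow> nat \<Rightarrow> quat) \<Rightarrow> bool" where
  "is_gram_of n m P G \<longleftrightarrow> (\<forall>k\<in>{1..m}. \<forall>j\<in>{1..m}. G k j = hform n (P j) (P k))"

definition semi_normalized :: "nat \<Rightarrow> nat \<Rightarrow> (nat \<Rightarrow> nat \<Rightarrow> quat) \<Rightarrow> bool" where
  "semi_normalized m i G \<longleftrightarrow>
     (\<forall>k\<in>{1..i}. G k k = 0) \<and>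
     (\<forall>k\<in>{i+1..m}. G k k = qreal (-1)) \<and>
     (\<forall>j\<in>{2..i}. G 1 j = 1) \<and>
     qnorm (G 2 3) = 1 \<and>
     (\<forall>j\<in>{i+1..m}. \<exists>r>0. G 1 j = qreal r)"

definition seminormalized_gram :: "nat \<Rightarrow> nat \<Rightarrow> nat \<Rightarrow> (nat \<Rightarrow> nat \<Rightarrow> quat) \<Rightarrow> bool" where
  "seminormalized_gram n m i G \<longleftrightarrow>
     (\<exists>P. admissible_lift n m i P \<and> is_gram_of n m P G) \<and> semi_normalized m i G"

text \<open>The vector V_G = (r_{1(i+1)},...,r_{1m}, g_{23},...,g_{2m}, g_{34},...,g_{3m}, ..., g_{(m-1)m}),
  as a list of length t = (m^2-m-2i+2)/2.\<close>
definition VG :: "nat \<Rightarrow> nat \<Rightarrow> (nat \<Rightarrow> nat \<Rightarrow> quat) \<Rightarrow> quat list" where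
  "VG m i G = map (\<lambda>j. G 1 j) [i+1..<m+1]
      @ concat (map (\<lambda>k. map (\<lambda>j. G k j) [k+1..<m+1]) [2..<m])"

definition sp1_orbit :: "quat list \<Rightarrow> quat list set" where
  "sp1_orbit V = {map (\<lambda>x. qcnj \<mu> * x * \<mu>) V | \<mu>. qnorm \<mu> = 1}"

text \<open>Equivalence: G1 = D^* G2 D for a nonsingular diagonal D = diag(d_1,...,d_m),
  i.e. entrywise (G1)_{kj} = conj(d_k) (G2)_{kj} d_j.\<close>
definition gram_equiv :: "nat \<Rightarrow> (nat \<Rightarrow> nat \<Rightarrow> quat) \<Rightarrow> (nat \<Rightarrow> nat \<Rightarrow> quat) \<Rightarrow> bool" where
  "gram_equiv m G1 G2 \<longleftrightarrow>
     (\<exists>d :: nat \<Rightarrow> quat. (\<forall>k\<in>{1..m}. d k \<noteq> 0) \<and>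
        (\<forall>k\<in>{1..m}. \<forall>j\<in>{1..m}. G1 k j = qcnj (d k) * G2 k j * d j))"

end

theory Submission
  imports Defs
begin

lemmas qdefs = zero_quat_def one_quat_def plus_quat_def minus_quat_def uminus_quat_def times_quat_def

instance quat :: ring_1
  by standard (simp_all add: qdefs algebra_simps)

lemma qcnj_mult: "qcnj (x*y) = qcnj y * qcnj x"
  by (simp add: qcnj_def qdefs algebra_simps)
lemma qcnj_add: "qcnj (x+y) = qcnj x + qcnj y"
  by (simp add: qcnj_def qdefs)
lemma qcnj_qcnj[simp]: "qcnj (qcnj x) = x"
  by (simp add: qcnj_def)
lemma qcnj_0[simp]: "qcnj 0 = 0" and qcnj_1[simp]: "qcnj 1 = 1"
  by (simp_all add: qcnj_def qdefs)
lemma qcnj_qreal[simp]: "qcnj (qreal r) = qreal r"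
  by (simp add: qcnj_def qreal_def)
lemma qreal_comm: "qreal r * x = x * qreal r"
  by (simp add: qreal_def qdefs)
lemma qreal_mult: "qreal r * qreal s = qreal (r*s)"
  by (simp add: qreal_def qdefs)
lemma qreal_1: "qreal 1 = 1" by (simp add: qreal_def qdefs)
lemma qreal_inj: "qreal r = qreal s \<longleftrightarrow> r = s" by (simp add: qreal_def)
lemma qnorm_sq: "(qnorm x)^2 = (qRe x)^2 + (qI x)^2 + (qJ x)^2 + (qK x)^2"
  by (simp add: qnorm_def)
lemma mult_cnj: "x * qcnj x = qreal ((qnorm x)^2)"
  unfolding qnorm_sq by (simp add: qnorm_sq qreal_def qcnj_def qdefs algebra_simps power2_eq_square)
lemma cnj_mult: "qcnj x * x = qreal ((qnorm x)^2)"
  unfolding qnorm_sq by (simp add: qnorm_sq qreal_def qcnj_def qdefs algebra_simps power2_eq_square)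
lemma qnorm_mult: "qnorm (x*y) = qnorm x * qnorm y"
  unfolding qnorm_def
  by (simp add: real_sqrt_mult[symmetric] qdefs) (simp add: algebra_simps power2_eq_square)
lemma qnorm_qreal: "qnorm (qreal r) = \<bar>r\<bar>" by (simp add: qnorm_def qreal_def)
lemma qnorm_0_iff: "qnorm x = 0 \<longleftrightarrow> x = 0"
  by (cases x) (simp add: qnorm_def qdefs add_nonneg_eq_0_iff)
lemma qnorm_1: "qnorm 1 = 1" by (simp add: qnorm_def qdefs)
lemma qnorm_cnj: "qnorm (qcnj x) = qnorm x" by (simp add: qnorm_def qcnj_def)
lemma qnorm_nonneg: "qnorm x \<ge> 0" by (simp add: qnorm_def)

lemma foldr_cnj: "qcnj (foldr (\<lambda>k acc. qcnj (z k) * w k + acc) xs 0) = foldr (\<lambda>k acc. qcnj (w k) * z k + acc) xs 0"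
  by (induction xs) (simp_all add: qcnj_add qcnj_mult)

lemma hform_herm: "hform n z w = qcnj (hform n w z)"
  unfolding hform_def qcnj_add qcnj_mult qcnj_qcnj foldr_cnj by (simp only: add_ac)

lemma concat_inj:
  "\<forall>k\<in>set L. length (F k) = length (H k) \<Longrightarrow> concat (map F L) = concat (map H L)
   \<Longrightarrow> \<forall>k\<in>set L. F k = H k"
  by (induction L) auto

lemma VG_map:
  assumes "\<forall>k\<in>{1..m}. \<forall>j\<in>{1..m}. G1 k j = f (G2 k j)" "1 \<le> i"
  shows "VG m i G1 = map f (VG m i G2)"
  unfolding VG_def map_append map_concat map_map
  using assms by (auto intro!: map_cong arg_cong[where f=concat])

lemma VG_inv:
  assumes "VG m i G1 = map f (VG m i G2)"
  shows "(\<forall>j\<in>{i+1..m}. G1 1 j = f (G2 1 j)) \<and> (\<forall>k j. 2\<le>k \<and> k<j \<and> j\<le>m \<longrightarrow> G1 k j = f (G2 k j))"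
proof -
  have e: "map (G1 1) [i+1..<m+1] @ concat (map (\<lambda>k. map (G1 k) [k+1..<m+1]) [2..<m])
    = map (f \<circ> G2 1) [i+1..<m+1] @ concat (map (\<lambda>k. map (f \<circ> G2 k) [k+1..<m+1]) [2..<m])"
    using assms unfolding VG_def map_append map_concat map_map by (simp add: comp_def)
  then have e1: "map (G1 1) [i+1..<m+1] = map (f \<circ> G2 1) [i+1..<m+1]"
    and e2: "concat (map (\<lambda>k. map (G1 k) [k+1..<m+1]) [2..<m]) = concat (map (\<lambda>k. map (f \<circ> G2 k) [k+1..<m+1]) [2..<m])"
    by (simp_all add: append_eq_append_conv)
  have "\<forall>k\<in>set [2..<m]. map (G1 k) [k+1..<m+1] = map (f \<circ> G2 k) [k+1..<m+1]"
    by (rule concat_inj[OF _ e2]) simp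
  then have h: "\<forall>k\<in>set [2..<m]. \<forall>j\<in>set [k+1..<m+1]. G1 k j = f (G2 k j)"
    by (simp only: map_eq_conv) simp
  have "G1 k j = f (G2 k j)" if "2\<le>k" "k<j" "j\<le>m" for k j
  proof -
    have "k \<in> set [2..<m]" "j \<in> set [k+1..<m+1]" using that by auto
    then show ?thesis using h by blast
  qed
  moreover have "\<forall>j\<in>{i+1..m}. G1 1 j = f (G2 1 j)"
    using e1 by (simp only: map_eq_conv) auto
  ultimately show ?thesis by blast
qed

lemma orbit_map:
  assumes "qnorm \<mu> = 1"
  shows "sp1_orbit (map (\<lambda>x. qcnj \<mu> * x * \<mu>) V) = sp1_orbit V"
proof -
  have mu1: "\<mu> * qcnj \<mu> = 1" using assms by (simp add: mult_cnj qreal_1)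
  show ?thesis
  proof
    show "sp1_orbit (map (\<lambda>x. qcnj \<mu> * x * \<mu>) V) \<subseteq> sp1_orbit V"
    proof
      fix W assume "W \<in> sp1_orbit (map (\<lambda>x. qcnj \<mu> * x * \<mu>) V)"
      then obtain \<nu> where W: "W = map (\<lambda>x. qcnj \<nu> * x * \<nu>) (map (\<lambda>x. qcnj \<mu> * x * \<mu>) V)" "qnorm \<nu> = 1"
        unfolding sp1_orbit_def by blast
      have "W = map (\<lambda>x. qcnj (\<mu>*\<nu>) * x * (\<mu>*\<nu>)) V"
        using W by (simp add: qcnj_mult mult.assoc)
      moreover have "qnorm (\<mu>*\<nu>) = 1" using W assms by (simp add: qnorm_mult)
      ultimately show "W \<in> sp1_orbit V" unfolding sp1_orbit_def by blast
    qed
  next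
    show "sp1_orbit V \<subseteq> sp1_orbit (map (\<lambda>x. qcnj \<mu> * x * \<mu>) V)"
    proof
      fix W assume "W \<in> sp1_orbit V"
      then obtain \<nu> where W: "W = map (\<lambda>x. qcnj \<nu> * x * \<nu>) V" "qnorm \<nu> = 1"
        unfolding sp1_orbit_def by blast
      have "W = map (\<lambda>x. qcnj (qcnj \<mu>*\<nu>) * x * (qcnj \<mu>*\<nu>)) (map (\<lambda>x. qcnj \<mu> * x * \<mu>) V)"
      proof -
        have "qcnj (qcnj \<mu>*\<nu>) * (qcnj \<mu> * x * \<mu>) * (qcnj \<mu>*\<nu>) = qcnj \<nu> * x * \<nu>" for x
        proof -
          have "qcnj (qcnj \<mu>*\<nu>) * (qcnj \<mu> * x * \<mu>) * (qcnj \<mu>*\<nu>)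
              = qcnj \<nu> * (\<mu> * qcnj \<mu>) * x * (\<mu> * qcnj \<mu>) * \<nu>"
            by (simp add: qcnj_mult mult.assoc)
          then show ?thesis by (simp add: mu1)
        qed
        then show ?thesis using W by simp
      qed
      moreover have "qnorm (qcnj \<mu>*\<nu>) = 1" using W assms by (simp add: qnorm_mult qnorm_cnj)
      ultimately show "W \<in> sp1_orbit (map (\<lambda>x. qcnj \<mu> * x * \<mu>) V)" unfolding sp1_orbit_def by blast
    qed
  qed
qed

lemma gram_herm:
  assumes "seminormalized_gram n m i G" "k \<in> {1..m}" "j \<in> {1..m}"
  shows "G k j = qcnj (G j k)"
  using assms hform_herm unfolding seminormalized_gram_def is_gram_of_def by metis

lemma unit_conj_eq:
  assumes "qnorm a = 1" "qcnj a * b = 1" shows "b = a"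
proof -
  have "a = a * (qcnj a * b)" using assms by simp
  also have "\<dots> = (a * qcnj a) * b" by (simp add: mult.assoc)
  also have "\<dots> = b" using assms by (simp add: mult_cnj qreal_1)
  finally show ?thesis by simp
qed

lemma conj_real: "qcnj a * qreal r * a = qreal (r * (qnorm a)^2)"
proof -
  have "qcnj a * qreal r * a = qreal r * (qcnj a * a)" by (simp add: qreal_comm mult.assoc)
  then show ?thesis by (simp add: cnj_mult qreal_mult)
qed

lemma dir1:
  assumes "m \<ge> 4" and "3 \<le> i" and "i \<le> m"
    and S1: "semi_normalized m i G1" and S2: "semi_normalized m i G2"
    and d0: "\<forall>k\<in>{1..m}. d k \<noteq> 0"
    and dG: "\<forall>k\<in>{1..m}. \<forall>j\<in>{1..m}. G1 k j = qcnj (d k) * G2 k j * d j"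
  shows "qnorm (d 1) = 1 \<and> (\<forall>k\<in>{1..m}. d k = d 1)"
proof -
  have A: "qcnj (d 1) * d j = 1" if "j \<in> {2..i}" for j
  proof -
    have "G1 1 j = 1" "G2 1 j = 1" using S1 S2 that unfolding semi_normalized_def by auto
    moreover have "G1 1 j = qcnj (d 1) * G2 1 j * d j" using dG that assms by auto
    ultimately show ?thesis by simp
  qed
  have N: "qnorm (d 1) * qnorm (d j) = 1" if "j \<in> {2..i}" for j
    using arg_cong[OF A[OF that], of qnorm] by (simp add: qnorm_mult qnorm_cnj qnorm_1)
  have N2: "qnorm (d 1) * qnorm (d 2) = 1" and N3: "qnorm (d 1) * qnorm (d 3) = 1"
    using N assms by auto
  have N23: "qnorm (d 2) * qnorm (d 3) = 1"
  proof -
    have "G1 2 3 = qcnj (d 2) * G2 2 3 * d 3" using dG assms by auto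
    moreover have "qnorm (G1 2 3) = 1" "qnorm (G2 2 3) = 1" using S1 S2 unfolding semi_normalized_def by auto
    ultimately show ?thesis by (metis qnorm_mult qnorm_cnj mult.right_neutral)
  qed
  have "qnorm (d 2) = qnorm (d 3)"
    using N2 N3 by (metis mult_left_cancel mult_zero_left zero_neq_one)
  then have "qnorm (d 2) * qnorm (d 2) = 1" using N23 by simp
  then have "(qnorm (d 2))^2 = 1" by (simp add: power2_eq_square)
  then have "qnorm (d 2) = 1" using qnorm_nonneg[of "d 2"]
    by (simp add: power2_eq_1_iff)
  then have U: "qnorm (d 1) = 1" using N2 by simp
  have B: "d j = d 1" if "j \<in> {1..m}" for j
  proof (cases "j \<le> i")
    case True
    show ?thesis
    proof (cases "j = 1")
      case False then show ?thesis using unit_conj_eq[OF U A] True that by auto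
    qed simp
  next
    case False
    then have j: "j \<in> {i+1..m}" using that by auto
    have "G1 j j = qreal (-1)" "G2 j j = qreal (-1)" using S1 S2 j unfolding semi_normalized_def by auto
    moreover have "G1 j j = qcnj (d j) * G2 j j * d j" using dG that by auto
    ultimately have "qreal (-1) = qreal (-1 * (qnorm (d j))^2)" by (simp add: conj_real)
    then have "(qnorm (d j))^2 = 1" by (simp add: qreal_inj)
    then have Uj: "qnorm (d j) = 1" using qnorm_nonneg[of "d j"]
      by (simp add: power2_eq_1_iff)
    have "\<exists>r>0. G1 1 j = qreal r" using S1 j unfolding semi_normalized_def by blast
    then obtain r1 where r1: "r1 > 0" "G1 1 j = qreal r1" by blast
    have "\<exists>r>0. G2 1 j = qreal r" using S2 j unfolding semi_normalized_def by blast
    then obtain r2 where r2: "r2 > 0" "G2 1 j = qreal r2" by blast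
    have "G1 1 j = qcnj (d 1) * G2 1 j * d j" using dG that assms by auto
    then have E: "qreal r1 = qreal r2 * (qcnj (d 1) * d j)"
      using r1 r2 by (simp add: qreal_comm mult.assoc)
    have "qnorm (qreal r1) = qnorm (qreal r2 * (qcnj (d 1) * d j))" using E by (rule arg_cong)
    then have "r1 = r2" using r1 r2 U Uj
      by (simp only: qnorm_mult qnorm_cnj qnorm_qreal)
    then have "qreal (1/r2) * qreal r2 = qreal (1/r2) * qreal r2 * (qcnj (d 1) * d j)"
      using E by (simp add: mult.assoc)
    then have "qcnj (d 1) * d j = 1" using r2 by (simp add: qreal_mult qreal_1)
    then show ?thesis using unit_conj_eq[OF U] by simp
  qed
  show ?thesis using U B by blast
qed

theorem lemma8p7:
  fixes n m i :: nat and G1 G2 :: "nat \<Rightarrow> nat \<Rightarrow> quat"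
  assumes "n \<ge> 1" and "m \<ge> 4" and "3 \<le> i" and "i \<le> m"
    and "seminormalized_gram n m i G1"
    and "seminormalized_gram n m i G2"
  shows "gram_equiv m G1 G2 \<longleftrightarrow> sp1_orbit (VG m i G1) = sp1_orbit (VG m i G2)"
proof
  have S1: "semi_normalized m i G1" and S2: "semi_normalized m i G2"
    using assms unfolding seminormalized_gram_def by auto
  assume "gram_equiv m G1 G2"
  then obtain d where d0: "\<forall>k\<in>{1..m}. d k \<noteq> 0"
    and dG: "\<forall>k\<in>{1..m}. \<forall>j\<in>{1..m}. G1 k j = qcnj (d k) * G2 k j * d j"
    unfolding gram_equiv_def by blast
  have D: "qnorm (d 1) = 1 \<and> (\<forall>k\<in>{1..m}. d k = d 1)"
    by (rule dir1[OF assms(2,3,4) S1 S2 d0 dG])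
  have "\<forall>k\<in>{1..m}. \<forall>j\<in>{1..m}. G1 k j = (\<lambda>x. qcnj (d 1) * x * d 1) (G2 k j)"
  proof (intro ballI)
    fix k j assume "k \<in> {1..m}" "j \<in> {1..m}"
    then have "d k = d 1" "d j = d 1" using D by blast+
    then show "G1 k j = (\<lambda>x. qcnj (d 1) * x * d 1) (G2 k j)" using dG \<open>k \<in> {1..m}\<close> \<open>j \<in> {1..m}\<close> by simp
  qed
  then have "VG m i G1 = map (\<lambda>x. qcnj (d 1) * x * d 1) (VG m i G2)"
    by (rule VG_map) (use assms in simp)
  then show "sp1_orbit (VG m i G1) = sp1_orbit (VG m i G2)"
    using orbit_map D by simp
next
  have S1: "semi_normalized m i G1" and S2: "semi_normalized m i G2"
    using assms unfolding seminormalized_gram_def by auto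
  assume O: "sp1_orbit (VG m i G1) = sp1_orbit (VG m i G2)"
  have "VG m i G1 \<in> sp1_orbit (VG m i G1)"
    unfolding sp1_orbit_def by (rule CollectI, rule exI[of _ 1]) (simp add: qnorm_1)
  then obtain \<mu> where mu: "qnorm \<mu> = 1" and V: "VG m i G1 = map (\<lambda>x. qcnj \<mu> * x * \<mu>) (VG m i G2)"
    using O unfolding sp1_orbit_def by blast
  note I = VG_inv[OF V]
  have cm: "qcnj \<mu> * \<mu> = 1" using mu by (simp add: cnj_mult qreal_1)
  have lt: "G1 k j = qcnj \<mu> * G2 k j * \<mu>" if "1 \<le> k" "k < j" "j \<le> m" for k j
  proof (cases "k = 1")
    case True
    show ?thesis
    proof (cases "j \<le> i")
      case True
      then have "G1 1 j = 1" "G2 1 j = 1" using S1 S2 that \<open>k=1\<close> unfolding semi_normalized_def by auto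
      then show ?thesis using cm \<open>k=1\<close> by simp
    next
      case False then show ?thesis using I that \<open>k=1\<close> by auto
    qed
  next
    case False then show ?thesis using I that by auto
  qed
  have eq: "G1 k k = qcnj \<mu> * G2 k k * \<mu>" if "1 \<le> k" "k \<le> m" for k
  proof (cases "k \<le> i")
    case True
    then have "G1 k k = 0" "G2 k k = 0" using S1 S2 that unfolding semi_normalized_def by auto
    then show ?thesis by simp
  next
    case False
    then have "G1 k k = qreal (-1)" "G2 k k = qreal (-1)" using S1 S2 that unfolding semi_normalized_def by auto
    then show ?thesis using mu by (simp add: conj_real)
  qed
  have all: "G1 k j = qcnj \<mu> * G2 k j * \<mu>" if "k \<in> {1..m}" "j \<in> {1..m}" for k j
  proof -
    consider "k < j" | "k = j" | "j < k" by linarith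
    then show ?thesis
    proof cases
      case 1 then show ?thesis using lt that by auto
    next
      case 2 then show ?thesis using eq that by auto
    next
      case 3
      have "G1 k j = qcnj (G1 j k)" using gram_herm[OF assms(5) that] .
      also have "\<dots> = qcnj (qcnj \<mu> * G2 j k * \<mu>)" using lt 3 that by auto
      also have "\<dots> = qcnj \<mu> * qcnj (G2 j k) * \<mu>" by (simp add: qcnj_mult mult.assoc)
      also have "qcnj (G2 j k) = G2 k j" using gram_herm[OF assms(6) that] by simp
      finally show ?thesis .
    qed
  qed
  have "\<mu> \<noteq> 0" using mu qnorm_0_iff[of \<mu>] by linarith
  then show "gram_equiv m G1 G2" unfolding gram_equiv_def using all
    by (intro exI[of _ "\<lambda>_. \<mu>"]) auto
qed

end
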